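(* Let $R$ be a $p\times p$ correlation matrix, let $v\sim\mathcal{N}(0,R)$, and let $r\in\mathbb{R}^p$ have entries $r_i=\Phi(v_i)$, where $\Phi$ is the standard normal cumulative distribution function (so $r$ is distributed according to a Gaussian copula with correlation matrix $R$). If $\Sigma$ is the covariance matrix of $r$, then $$\|\Sigma\|_2\le\frac1{2\pi}\Big(\frac{\|R\|_2}{2}+4\|R\|_2^2\Big(\frac\pi6-\frac12\Big)\Big).$$
   Context: $\|\cdot\|_2$ denotes the operator norm. A correlation matrix is a positive semidefinite matrix with all diagonal entries equal to $1$. *)

theory Defs
  imports "HOL-Probability.Probability"
begin

text \<open>Correlation matrix: symmetric positive semidefinite, unit diagonal.\<close>
definition correlation_matrix :: "real^'n^'n \<Rightarrow> bool" where
  "correlation_matrix R \<longleftrightarrow> transpose R = R \<and> (\<forall>x. 0 \<le> x \<bullet> (R *v x)) \<and> (\<forall>i. R $ i $ i = 1)"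

text \<open>Operator (spectral) norm of a matrix, as the norm of the induced linear map on Euclidean space.\<close>
definition op_norm2 :: "real^'n^'m \<Rightarrow> real" where
  "op_norm2 A = onorm (\<lambda>x. A *v x)"

text \<open>v is a centered Gaussian random vector with covariance matrix R on the probability space M
  (characteristic-function definition, which also covers singular R).\<close>
definition centered_gaussian_vector :: "'a measure \<Rightarrow> ('a \<Rightarrow> real^'n) \<Rightarrow> real^'n^'n \<Rightarrow> bool" where
  "centered_gaussian_vector M v R \<longleftrightarrow> v \<in> borel_measurable M \<and>
     (\<forall>a. (CLINT \<omega>|M. iexp (a \<bullet> v \<omega>)) = complex_of_real (exp (- (a \<bullet> (R *v a)) / 2)))"

text \<open>Standard normal cumulative distribution function.\<close>
definition Phi :: "real \<Rightarrow> real" where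
  "Phi = cdf (density lborel std_normal_density)"

text \<open>Covariance matrix of a random vector r.\<close>
definition cov_matrix :: "'a measure \<Rightarrow> ('a \<Rightarrow> real^'n) \<Rightarrow> real^'n^'n" where
  "cov_matrix M r = (\<chi> i j. LINT \<omega>|M. (r \<omega> $ i - (LINT \<omega>'|M. r \<omega>' $ i)) * (r \<omega> $ j - (LINT \<omega>'|M. r \<omega>' $ j)))"

end

theory Submission
  imports Defs
begin

(* ---- P1 ---- *)
abbreviation "phi \<equiv> std_normal_density"

lemma Phi_eq: "Phi x = (LINT u|lborel. indicator {..x} u * phi u)"
proof -
  interpret N: real_distribution "density lborel std_normal_density" by (rule real_dist_normal_dist)
  have "Phi x = measure (density lborel std_normal_density) {..x}"
    by (simp add: Phi_def cdf_def)
  also have "\<dots> = integral\<^sup>L (density lborel std_normal_density) (indicator {..x})"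
    by simp
  also have "\<dots> = (LINT u|lborel. phi u * indicator {..x} u)"
    by (subst integral_density) auto
  finally show ?thesis by (simp add: mult.commute)
qed

lemma Phi_diff: "Phi x - Phi 0 = (LBINT u=0..x. phi u)"
proof (cases "0 \<le> x")
  case True
  interpret N: real_distribution "density lborel std_normal_density" by (rule real_dist_normal_dist)
  show ?thesis
  proof (cases "x = 0")
    case False
    with True have "Phi x - Phi 0 = measure (density lborel std_normal_density) {0<..x}"
      unfolding Phi_def by (intro N.cdf_diff_eq) auto
    also have "\<dots> = integral\<^sup>L (density lborel std_normal_density) (indicator {0<..x})"
      by simp
    also have "\<dots> = (LINT u|lborel. phi u * indicator {0<..x} u)"
      by (subst integral_density) auto
    also have "\<dots> = (LBINT u=0..x. phi u)"
      using interval_integral_Ioc[of 0 x phi] True by (simp add: set_lebesgue_integral_def mult.commute zero_ereal_def[symmetric])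
    finally show ?thesis .
  qed (simp add: interval_lebesgue_integral_def einterval_same zero_ereal_def[symmetric] set_lebesgue_integral_def)
next
  case False
  interpret N: real_distribution "density lborel std_normal_density" by (rule real_dist_normal_dist)
  from False have "Phi 0 - Phi x = measure (density lborel std_normal_density) {x<..0}"
    unfolding Phi_def by (intro N.cdf_diff_eq) auto
  also have "\<dots> = integral\<^sup>L (density lborel std_normal_density) (indicator {x<..0})"
    by simp
  also have "\<dots> = (LINT u|lborel. phi u * indicator {x<..0} u)"
    by (subst integral_density) auto
  also have "\<dots> = (LBINT u=x..0. phi u)"
    using interval_integral_Ioc[of x 0 phi] False by (simp add: set_lebesgue_integral_def mult.commute zero_ereal_def[symmetric])
  finally show ?thesis by (subst interval_integral_endpoints_reverse) simp
qed

lemma cont_phi: "continuous_on A phi"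
  unfolding std_normal_density_def by (intro continuous_intros) auto

lemma DERIV_Phi: "(Phi has_real_derivative phi x) (at x)"
proof -
  define a where "a = - \<bar>x\<bar> - 1"
  define b where "b = \<bar>x\<bar> + 1"
  have "((\<lambda>u. LBINT y=ereal 0..u. phi y) has_vector_derivative (phi x)) (at x within {a..b})"
    by (rule interval_integral_FTC2) (auto simp: a_def b_def intro: cont_phi)
  hence "((\<lambda>u. LBINT y=0..u. phi y) has_vector_derivative (phi x)) (at x within {a..b})"
    by (simp add: zero_ereal_def)
  hence "((\<lambda>u. LBINT y=0..u. phi y) has_vector_derivative (phi x)) (at x)"
    by (subst (asm) at_within_interior[of x]) (auto simp: a_def b_def)
  hence "((\<lambda>u. LBINT y=0..u. phi y) has_real_derivative (phi x)) (at x)"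
    by (simp add: has_real_derivative_iff_has_vector_derivative)
  from DERIV_add[OF DERIV_const[of "Phi 0"] this]
  have "((\<lambda>u. Phi 0 + (LBINT y=0..u. phi y)) has_real_derivative (phi x)) (at x)" by simp
  moreover have "(\<lambda>u. Phi 0 + (LBINT y=0..u. phi y)) = Phi"
    by (rule ext) (simp add: Phi_diff[symmetric])
  ultimately show ?thesis by simp
qed

(* ---- P2 ---- *)
lemma Phi_lim_bot: "(Phi \<longlongrightarrow> 0) at_bot"
proof -
  interpret N: real_distribution "density lborel std_normal_density" by (rule real_dist_normal_dist)
  show ?thesis unfolding Phi_def by (rule N.cdf_lim_at_bot)
qed

lemma Phi_lim_top: "(Phi \<longlongrightarrow> 1) at_top"
proof -
  interpret N: real_distribution "density lborel std_normal_density" by (rule real_dist_normal_dist)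
  show ?thesis unfolding Phi_def by (rule N.cdf_lim_at_top_prob)
qed

lemma isCont_Phi: "isCont Phi x"
  using DERIV_Phi by (rule DERIV_isCont)

lemma isCont_phi: "isCont phi x"
  using cont_phi[of UNIV] by (simp add: continuous_on_eq_continuous_at)

lemma Phi_pow_integral:
  shows "integrable lborel (\<lambda>x. phi x * Phi x ^ k)"
    and "(LINT x|lborel. phi x * Phi x ^ k) = 1 / real (Suc k)"
proof -
  interpret N: real_distribution "density lborel std_normal_density" by (rule real_dist_normal_dist)
  have Phi_nn: "0 \<le> Phi x" for x unfolding Phi_def by (rule N.cdf_nonneg)
  define F where "F x = Phi x ^ Suc k / real (Suc k)" for x
  have D: "DERIV F x :> phi x * Phi x ^ k" for x
  proof -
    have "DERIV (\<lambda>x. Phi x ^ Suc k) x :> real (Suc k) * Phi x ^ k * phi x"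
      using DERIV_power[OF DERIV_Phi[of x], of "Suc k"] by (simp add: mult_ac)
    from DERIV_cdivide[OF this, of "real (Suc k)"]
    have "DERIV (\<lambda>x. Phi x ^ Suc k / real (Suc k)) x :> real (Suc k) * Phi x ^ k * phi x / real (Suc k)" .
    moreover have "real (Suc k) * Phi x ^ k * phi x / real (Suc k) = phi x * Phi x ^ k"
      by (simp only: nonzero_mult_div_cancel_left of_nat_Suc) (simp add: mult_ac)
    ultimately show ?thesis unfolding F_def by (simp add: mult.commute)
  qed
  have Fb: "((F \<circ> real_of_ereal) \<longlongrightarrow> 0) (at_right (-\<infinity>))"
    unfolding ereal_tendsto_simps F_def
    using Phi_lim_bot by (auto intro!: tendsto_eq_intros)
  have Ft: "((F \<circ> real_of_ereal) \<longlongrightarrow> 1 / real (Suc k)) (at_left \<infinity>)"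
    unfolding ereal_tendsto_simps F_def
    using Phi_lim_top by (auto intro!: tendsto_eq_intros)
  have C: "isCont (\<lambda>x. phi x * Phi x ^ k) x" for x
    using isCont_Phi isCont_phi by (auto intro!: continuous_intros)
  note FTC = interval_integral_FTC_nonneg[of "-\<infinity>" \<infinity> F "\<lambda>x. phi x * Phi x ^ k", OF _ D C _ Fb Ft]
  have I: "set_integrable lborel (einterval (-\<infinity>) \<infinity>) (\<lambda>x. phi x * Phi x ^ k)"
    and V: "(LBINT x=-\<infinity>..\<infinity>. phi x * Phi x ^ k) = 1 / real (Suc k) - 0"
    by (rule FTC; auto simp: Phi_nn)+
  from I show "integrable lborel (\<lambda>x. phi x * Phi x ^ k)"
    by (simp add: set_integrable_def einterval_eq_UNIV)
  from V show "(LINT x|lborel. phi x * Phi x ^ k) = 1 / real (Suc k)"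
    by (simp add: interval_lebesgue_integral_def set_lebesgue_integral_def einterval_eq_UNIV)
qed

(* ---- P3 ---- *)
lemma integrable_prod_mult:
  fixes f :: "'a \<Rightarrow> real" and g :: "'b \<Rightarrow> real"
  assumes "pair_sigma_finite M1 M2" "integrable M1 f" "integrable M2 g"
  shows "integrable (M1 \<Otimes>\<^sub>M M2) (\<lambda>p. f (fst p) * g (snd p))"
proof -
  interpret pair_sigma_finite M1 M2 by fact
  have [measurable]: "f \<in> borel_measurable M1" "g \<in> borel_measurable M2"
    using assms by auto
  show ?thesis
  proof (rule Fubini_integrable)
    show "integrable M1 (\<lambda>x. LINT y|M2. norm (f (fst (x, y)) * g (snd (x, y))))"
      using assms(2,3) by (simp add: abs_mult)
    show "AE x in M1. integrable M2 (\<lambda>y. f (fst (x, y)) * g (snd (x, y)))"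
      using assms(3) by simp
  qed measurable
qed

lemma Re_integral:
  fixes f :: "'a \<Rightarrow> complex"
  assumes "integrable M f"
  shows "Re (integral\<^sup>L M f) = (LINT x|M. Re (f x))"
  using integral_bounded_linear[OF bounded_linear_Re assms] by simp

lemma Re_iexp: "Re (iexp x) = cos x"
  by (simp add: cis_conv_exp[symmetric])

lemma Im_iexp: "Im (iexp x) = sin x"
  by (simp add: cis_conv_exp[symmetric])

lemma cos_gauss_integral:
  shows "integrable lborel (\<lambda>s. exp (- s\<^sup>2 / 2) * cos (s * u))"
    and "(LINT s|lborel. exp (- s\<^sup>2 / 2) * cos (s * u)) = sqrt (2 * pi) * exp (- u\<^sup>2 / 2)"
proof -
  interpret N: real_distribution "density lborel std_normal_density" by (rule real_dist_normal_dist)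
  have ii: "integrable (density lborel std_normal_density) (\<lambda>x. iexp (u * x))"
    by (rule N.integrable_iexp) auto
  have "Re (char (density lborel std_normal_density) u) = exp (- u\<^sup>2 / 2)"
    by (simp add: char_std_normal_distribution)
  hence "(LINT x|density lborel std_normal_density. cos (u * x)) = exp (- u\<^sup>2 / 2)"
    unfolding char_def by (subst (asm) Re_integral[OF ii]) (simp only: Re_iexp)
  hence "(LINT x|lborel. phi x * cos (u * x)) = exp (- u\<^sup>2 / 2)"
    by (subst (asm) integral_density) auto
  moreover have "(\<lambda>x. phi x * cos (u * x)) = (\<lambda>x. (1 / sqrt (2 * pi)) * (exp (- x\<^sup>2 / 2) * cos (x * u)))"
    by (auto simp: std_normal_density_def mult_ac)
  ultimately have E: "(LINT x|lborel. exp (- x\<^sup>2 / 2) * cos (x * u)) / sqrt (2 * pi) = exp (- u\<^sup>2 / 2)"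
    by simp
  then show "(LINT s|lborel. exp (- s\<^sup>2 / 2) * cos (s * u)) = sqrt (2 * pi) * exp (- u\<^sup>2 / 2)"
    by (simp add: field_simps)
  have "(\<lambda>s::real. exp (- s\<^sup>2 / 2)) = (\<lambda>s. sqrt (2 * pi) * phi s)"
    by (auto simp: std_normal_density_def fun_eq_iff)
  moreover have "integrable lborel (\<lambda>s. sqrt (2 * pi) * phi s)"
    by (intro integrable_mult_right) (rule integrable_normal_density, simp)
  ultimately have ig: "integrable lborel (\<lambda>s::real. exp (- s\<^sup>2 / 2))" by simp
  show "integrable lborel (\<lambda>s. exp (- s\<^sup>2 / 2) * cos (s * u))"
  proof (rule Bochner_Integration.integrable_bound[OF ig])
    show "AE s in lborel. norm (exp (- s\<^sup>2 / 2) * cos (s * u)) \<le> norm (exp (- s\<^sup>2 / 2))"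
      by (intro AE_I2) (simp add: abs_mult mult_left_le)
  qed simp
qed

(* ---- P5 ---- *)
definition gg :: "real \<Rightarrow> real \<Rightarrow> real" where
  "gg s x = exp (- s\<^sup>2 / 2) * sin (s * x) / s"

lemma gg_measurable[measurable (raw)]:
  "f \<in> borel_measurable N \<Longrightarrow> g \<in> borel_measurable N \<Longrightarrow> (\<lambda>x. gg (f x) (g x)) \<in> borel_measurable N"
proof -
  assume [measurable]: "f \<in> borel_measurable N" "g \<in> borel_measurable N"
  have [measurable]: "(\<lambda>x. sin (f x * g x)) \<in> borel_measurable N"
    using measurable_compose[OF _ borel_measurable_sin, of "\<lambda>x. f x * g x" N] by measurable
  show ?thesis unfolding gg_def by measurable
qed

lemma gg_bound: "\<bar>gg s x\<bar> \<le> exp (- s\<^sup>2 / 2) * \<bar>x\<bar>"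
proof (cases "s = 0")
  case False
  have "\<bar>sin (s * x)\<bar> \<le> \<bar>s\<bar> * \<bar>x\<bar>" using abs_sin_x_le_abs_x[of "s * x"] by (simp add: abs_mult)
  hence "\<bar>sin (s * x)\<bar> / \<bar>s\<bar> \<le> \<bar>x\<bar>" using False by (simp add: divide_le_eq mult.commute)
  hence "exp (- s\<^sup>2 / 2) * (\<bar>sin (s * x)\<bar> / \<bar>s\<bar>) \<le> exp (- s\<^sup>2 / 2) * \<bar>x\<bar>"
    by (rule mult_left_mono) simp
  thus ?thesis by (simp add: gg_def abs_mult abs_divide)
qed (simp add: gg_def)

lemma gg_bound2: "\<bar>gg s x\<bar> \<le> 1 / \<bar>s\<bar>"
proof (cases "s = 0")
  case False
  have "exp (- s\<^sup>2 / 2) \<le> 1" by simp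
  moreover have "\<bar>sin (s * x)\<bar> \<le> 1" by simp
  ultimately have "exp (- s\<^sup>2 / 2) * \<bar>sin (s * x)\<bar> \<le> 1"
    by (simp add: mult_le_one)
  thus ?thesis using False by (simp add: gg_def abs_mult abs_divide divide_right_mono)
qed (simp add: gg_def)

lemma integrable_gauss: "integrable lborel (\<lambda>s::real. exp (- s\<^sup>2 / 2))"
  using cos_gauss_integral(1)[of 0] by simp

lemma fubini_gg:
  fixes Z W :: "'a \<Rightarrow> real"
  assumes M: "prob_space M" and Z[measurable]: "Z \<in> borel_measurable M" and iZ: "integrable M Z"
    and W[measurable]: "W \<in> borel_measurable M" and Wb: "\<And>\<omega>. \<bar>W \<omega>\<bar> \<le> B"
  shows "integrable lborel (\<lambda>s. LINT \<omega>|M. gg s (Z \<omega>) * W \<omega>)"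
    and "(LINT \<omega>|M. (LINT s|lborel. gg s (Z \<omega>)) * W \<omega>) = (LINT s|lborel. LINT \<omega>|M. gg s (Z \<omega>) * W \<omega>)"
proof -
  interpret M: prob_space M by fact
  interpret P: pair_sigma_finite lborel M
    by (intro pair_sigma_finite.intro lborel.sigma_finite_measure_axioms M.sigma_finite_measure_axioms)
  have B: "0 \<le> B" using Wb[of undefined] by simp
  have gm[measurable]: "(\<lambda>p. gg (fst p) (Z (snd p)) * W (snd p)) \<in> borel_measurable (lborel \<Otimes>\<^sub>M M)"
    by measurable
  have int: "integrable (lborel \<Otimes>\<^sub>M M) (\<lambda>p. gg (fst p) (Z (snd p)) * W (snd p))"
  proof (rule Bochner_Integration.integrable_bound)
    show "integrable (lborel \<Otimes>\<^sub>M M) (\<lambda>p. exp (- (fst p)\<^sup>2 / 2) * (B * \<bar>Z (snd p)\<bar>))"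
      by (rule integrable_prod_mult[OF _ integrable_gauss]) (auto intro: iZ P.pair_sigma_finite_axioms)
    show "AE p in lborel \<Otimes>\<^sub>M M. norm (gg (fst p) (Z (snd p)) * W (snd p)) \<le> norm (exp (- (fst p)\<^sup>2 / 2) * (B * \<bar>Z (snd p)\<bar>))"
    proof (intro AE_I2)
      fix p :: "real \<times> 'a"
      have "\<bar>gg (fst p) (Z (snd p))\<bar> * \<bar>W (snd p)\<bar> \<le> (exp (- (fst p)\<^sup>2 / 2) * \<bar>Z (snd p)\<bar>) * B"
        by (intro mult_mono gg_bound Wb) auto
      thus "norm (gg (fst p) (Z (snd p)) * W (snd p)) \<le> norm (exp (- (fst p)\<^sup>2 / 2) * (B * \<bar>Z (snd p)\<bar>))"
        using B by (simp add: abs_mult mult_ac)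
    qed
  qed measurable
  from P.integrable_fst'[OF int]
  show "integrable lborel (\<lambda>s. LINT \<omega>|M. gg s (Z \<omega>) * W \<omega>)" by simp
  have "(LINT \<omega>|M. (LINT s|lborel. gg s (Z \<omega>)) * W \<omega>) = (LINT \<omega>|M. LINT s|lborel. gg s (Z \<omega>) * W \<omega>)"
    by simp
  also have "\<dots> = (LINT s|lborel. LINT \<omega>|M. gg s (Z \<omega>) * W \<omega>)"
    using P.Fubini_integral[of "\<lambda>s \<omega>. gg s (Z \<omega>) * W \<omega>", unfolded split_beta'] int by simp
  finally show "(LINT \<omega>|M. (LINT s|lborel. gg s (Z \<omega>)) * W \<omega>) = (LINT s|lborel. LINT \<omega>|M. gg s (Z \<omega>) * W \<omega>)" .
qed

(* ---- P4 ---- *)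
lemma phi_fourier: "phi u = (1 / (2 * pi)) * (LINT s|lborel. exp (- s\<^sup>2 / 2) * cos (s * u))"
proof -
  define t where "t = sqrt (2 * pi)"
  have t: "t > 0" "t * t = 2 * pi" by (auto simp: t_def)
  have "(LINT s|lborel. exp (- s\<^sup>2 / 2) * cos (s * u)) = t * exp (- u\<^sup>2 / 2)"
    using cos_gauss_integral(2)[of u] by (simp add: t_def)
  hence "(1 / (2 * pi)) * (LINT s|lborel. exp (- s\<^sup>2 / 2) * cos (s * u)) = 1 / (t * t) * (t * exp (- u\<^sup>2 / 2))"
    by (simp only: t(2))
  also have "\<dots> = exp (- u\<^sup>2 / 2) / t" using t by (simp add: field_simps)
  finally show ?thesis by (simp add: std_normal_density_def t_def)
qed

lemma cos_interval: "s \<noteq> 0 \<Longrightarrow> (LINT u|lborel. indicator {a..b} u * cos (s * u)) = (sin (s * b) - sin (s * a)) / s"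
  if "a \<le> b" for a b s :: real
proof -
  assume s: "s \<noteq> 0"
  have "(LINT u|lborel. indicator {a..b} u * cos (s * u)) = (LBINT u=a..b. cos (s * u))"
    using that by (simp add: interval_integral_Icc set_lebesgue_integral_def)
  also have "\<dots> = sin (s * b) / s - sin (s * a) / s"
  proof (rule interval_integral_FTC_finite)
    show "continuous_on {min a b..max a b} (\<lambda>u. cos (s * u))"
      by (intro continuous_intros)
    fix x
    have "((\<lambda>u. sin (s * u) / s) has_real_derivative cos (s * x)) (at x)"
      using s by (auto intro!: derivative_eq_intros)
    then show "((\<lambda>u. sin (s * u) / s) has_vector_derivative cos (s * x)) (at x within {min a b..max a b})"
      by (simp add: has_real_derivative_iff_has_vector_derivative has_vector_derivative_at_within)
  qed
  finally show ?thesis by (simp add: diff_divide_distrib)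
qed

lemma Phi_interval:
  assumes "a \<le> b"
  shows "(LINT u|lborel. indicator {a..b} u * phi u)
     = (1 / (2 * pi)) * (LINT s|lborel. exp (- s\<^sup>2 / 2) * (sin (s * b) - sin (s * a)) / s)"
proof -

  define f where "f = (\<lambda>u s::real. indicator {a..b} u * (exp (- s\<^sup>2 / 2) * cos (s * u)))"
  have intf: "integrable (lborel \<Otimes>\<^sub>M lborel) (case_prod f)"
  proof (rule Bochner_Integration.integrable_bound)
    show "integrable (lborel \<Otimes>\<^sub>M lborel) (\<lambda>p::real\<times>real. indicator {a..b} (fst p) * exp (- (snd p)\<^sup>2 / 2))"
      by (rule integrable_prod_mult[OF _ _ integrable_gauss]) (auto intro: pair_sigma_finite.intro lborel.sigma_finite_measure_axioms integrable_real_indicator simp: emeasure_lborel_Icc_eq)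
    show "AE p in lborel \<Otimes>\<^sub>M lborel. norm (case_prod f p) \<le> norm (indicator {a..b} (fst p) * exp (- (snd p)\<^sup>2 / 2) :: real)"
      by (auto simp: f_def abs_mult indicator_def intro!: mult_left_le_one_le)
  qed (simp add: f_def)
  have "(LINT u|lborel. indicator {a..b} u * phi u) = (LINT u|lborel. (1 / (2 * pi)) * (LINT s|lborel. f u s))"
    by (intro Bochner_Integration.integral_cong refl) (simp add: f_def phi_fourier)
  also have "\<dots> = (1 / (2 * pi)) * (LINT u|lborel. LINT s|lborel. f u s)"
    by simp
  also have "(LINT u|lborel. LINT s|lborel. f u s) = (LINT s|lborel. LINT u|lborel. f u s)"
    using pair_sigma_finite.Fubini_integral[OF _ intf] by (simp add: pair_sigma_finite.intro lborel.sigma_finite_measure_axioms)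
  also have "\<dots> = (LINT s|lborel. exp (- s\<^sup>2 / 2) * (sin (s * b) - sin (s * a)) / s)"
  proof (intro integral_cong_AE)
    show "AE s in lborel. (LINT u|lborel. f u s) = exp (- s\<^sup>2 / 2) * (sin (s * b) - sin (s * a)) / s"
      using AE_lborel_singleton[of "0::real"]
    proof eventually_elim
      case (elim s)
      have "(LINT u|lborel. f u s) = exp (- s\<^sup>2 / 2) * (LINT u|lborel. indicator {a..b} u * cos (s * u))"
      proof -
        have "(\<lambda>u. f u s) = (\<lambda>u. exp (- s\<^sup>2 / 2) * (indicator {a..b} u * cos (s * u)))"
          by (auto simp: f_def fun_eq_iff)
        then show ?thesis by (simp only: integral_mult_right_zero)
      qed
      also have "\<dots> = exp (- s\<^sup>2 / 2) * (sin (s * b) - sin (s * a)) / s"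
        using cos_interval[OF assms elim] by simp
      finally show ?case .
    qed
  qed (auto simp: f_def)
  finally show ?thesis .
qed

lemma Phi_fourier: "Phi x = Phi 0 + (1 / (2 * pi)) * (LINT s|lborel. gg s x)"
proof (cases "0 \<le> x")
  case True
  have "Phi x - Phi 0 = (LBINT u=0..x. phi u)" by (rule Phi_diff)
  also have "\<dots> = (LINT u|lborel. indicator {0..x} u * phi u)"
    using True interval_integral_Icc[of 0 x phi] by (simp add: set_lebesgue_integral_def zero_ereal_def[symmetric] mult.commute)
  also have "\<dots> = (1 / (2 * pi)) * (LINT s|lborel. gg s x)"
    using Phi_interval[OF True] by (simp add: gg_def)
  finally show ?thesis by simp
next
  case False
  have "Phi x - Phi 0 = (LBINT u=0..x. phi u)" by (rule Phi_diff)
  also have "\<dots> = - (LBINT u=x..0. phi u)"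
    by (rule interval_integral_endpoints_reverse)
  also have "(LBINT u=x..0. phi u) = (LINT u|lborel. indicator {x..0} u * phi u)"
    using False interval_integral_Icc[of x 0 phi] by (simp add: set_lebesgue_integral_def zero_ereal_def[symmetric] mult.commute)
  also have "\<dots> = (1 / (2 * pi)) * (LINT s|lborel. exp (- s\<^sup>2 / 2) * (0 - sin (s * x)) / s)"
    using Phi_interval[of x 0] False by simp
  also have "(LINT s|lborel. exp (- s\<^sup>2 / 2) * (0 - sin (s * x)) / s) = - (LINT s|lborel. gg s x)"
    by (simp add: gg_def)
  finally show ?thesis by simp
qed

(* ---- P6 ---- *)
lemma Im_integral:
  fixes f :: "'a \<Rightarrow> complex"
  assumes "integrable M f"
  shows "Im (integral\<^sup>L M f) = (LINT x|M. Im (f x))"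
  using integral_bounded_linear[OF bounded_linear_Im assms] by simp

context
  fixes M :: "'a measure" and R :: "real^'n^'n" and v :: "'a \<Rightarrow> real^'n"
  assumes M: "prob_space M" and R: "correlation_matrix R" and G: "centered_gaussian_vector M v R"
begin

lemma v_meas[measurable]: "v \<in> borel_measurable M"
  using G by (simp add: centered_gaussian_vector_def)

lemma vi_meas[measurable]: "(\<lambda>\<omega>. v \<omega> $ i) \<in> borel_measurable M"
  using measurable_compose[OF v_meas borel_measurable_nth] by simp

lemma R_sym: "R $ j $ i = R $ i $ j"
proof -
  have "transpose R = R" using R by (simp add: correlation_matrix_def)
  hence "transpose R $ i $ j = R $ i $ j" by simp
  thus ?thesis by (simp add: transpose_def)
qed

lemma R_diag: "R $ i $ i = 1"
  using R by (simp add: correlation_matrix_def)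

lemma char2:
  "(CLINT \<omega>|M. iexp (s * v \<omega> $ i + t * v \<omega> $ j)) = complex_of_real (exp (- (s\<^sup>2 + 2 * s * t * R $ i $ j + t\<^sup>2) / 2))"
proof -
  define a :: "real^'n" where "a = (\<chi> k. (if k = i then s else 0) + (if k = j then t else 0))"
  have m1: "(if P then x else 0) * y = (if P then x * y else (0::real))" for P x y by simp
  have m2: "y * (if P then x else 0) = (if P then y * x else (0::real))" for P x y by simp
  have av: "a \<bullet> w = s * w $ i + t * w $ j" for w :: "real^'n"
    by (simp add: a_def inner_vec_def sum.distrib distrib_right m1)
  have Ra: "(R *v a) $ k = s * R $ k $ i + t * R $ k $ j" for k
    by (simp add: a_def matrix_vector_mult_def sum.distrib distrib_left m2 mult.commute)
  have "a \<bullet> (R *v a) = s * (s * R $ i $ i + t * R $ i $ j) + t * (s * R $ j $ i + t * R $ j $ j)"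
    by (simp add: av Ra)
  also have "\<dots> = s\<^sup>2 + 2 * s * t * R $ i $ j + t\<^sup>2"
    by (simp add: R_diag R_sym power2_eq_square algebra_simps)
  finally have aRa: "a \<bullet> (R *v a) = s\<^sup>2 + 2 * s * t * R $ i $ j + t\<^sup>2" .
  from G have "(CLINT \<omega>|M. iexp (a \<bullet> v \<omega>)) = complex_of_real (exp (- (a \<bullet> (R *v a)) / 2))"
    by (simp add: centered_gaussian_vector_def)
  hence "(CLINT \<omega>|M. iexp (a \<bullet> v \<omega>)) = complex_of_real (exp (- (s\<^sup>2 + 2 * s * t * R $ i $ j + t\<^sup>2) / 2))"
    by (simp only: aRa)
  then show ?thesis by (simp only: av)
qed

lemma int_iexp: "integrable M (\<lambda>\<omega>. iexp (f \<omega>))" if [measurable]: "f \<in> borel_measurable M"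
  using prob_space.integrable_iexp[OF M, of "\<lambda>\<omega>. complex_of_real (f \<omega>)"] by simp

lemma E_cos: "(LINT \<omega>|M. cos (s * v \<omega> $ i + t * v \<omega> $ j)) = exp (- (s\<^sup>2 + 2 * s * t * R $ i $ j + t\<^sup>2) / 2)"
proof -
  have mf: "(\<lambda>\<omega>. s * v \<omega> $ i + t * v \<omega> $ j) \<in> borel_measurable M" by measurable
  have "Re (CLINT \<omega>|M. iexp (s * v \<omega> $ i + t * v \<omega> $ j)) = exp (- (s\<^sup>2 + 2 * s * t * R $ i $ j + t\<^sup>2) / 2)"
    by (simp only: char2) simp
  thus ?thesis by (subst (asm) Re_integral[OF int_iexp[OF mf]]) (auto simp only: Re_iexp)
qed

lemma E_sin: "(LINT \<omega>|M. sin (s * v \<omega> $ i + t * v \<omega> $ j)) = 0"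
proof -
  have mf: "(\<lambda>\<omega>. s * v \<omega> $ i + t * v \<omega> $ j) \<in> borel_measurable M" by measurable
  have "Im (CLINT \<omega>|M. iexp (s * v \<omega> $ i + t * v \<omega> $ j)) = 0"
    by (simp only: char2) simp
  thus ?thesis by (subst (asm) Im_integral[OF int_iexp[OF mf]]) (auto simp only: Im_iexp)
qed

lemma E_sin1: "(LINT \<omega>|M. sin (s * v \<omega> $ i)) = 0"
  using E_sin[of s i 0 i] by simp

lemma E_sinsin: "(LINT \<omega>|M. sin (s * v \<omega> $ i) * sin (t * v \<omega> $ j))
   = exp (- (s\<^sup>2 + t\<^sup>2) / 2) * sinh (s * t * R $ i $ j)"
proof -
  interpret prob_space M by (rule M)
  have eq: "sin (s * v \<omega> $ i) * sin (t * v \<omega> $ j) =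
     (cos (s * v \<omega> $ i + (- t) * v \<omega> $ j) - cos (s * v \<omega> $ i + t * v \<omega> $ j)) / 2" for \<omega>
    by (simp add: cos_add cos_diff)
  have ic: "integrable M (\<lambda>\<omega>. cos (s * v \<omega> $ i + t * v \<omega> $ j))" for s t
    by (intro integrable_const_bound[where B=1]) auto
  have "(LINT \<omega>|M. sin (s * v \<omega> $ i) * sin (t * v \<omega> $ j))
     = (LINT \<omega>|M. (cos (s * v \<omega> $ i + (- t) * v \<omega> $ j) - cos (s * v \<omega> $ i + t * v \<omega> $ j)) / 2)"
    by (simp only: eq)
  also have "\<dots> = ((LINT \<omega>|M. cos (s * v \<omega> $ i + (- t) * v \<omega> $ j)) - (LINT \<omega>|M. cos (s * v \<omega> $ i + t * v \<omega> $ j))) / 2"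
    by (subst integral_divide_zero) (subst Bochner_Integration.integral_diff[OF ic ic], rule refl)
  also have "\<dots> = (exp (- (s\<^sup>2 + 2 * s * (- t) * R $ i $ j + (- t)\<^sup>2) / 2) - exp (- (s\<^sup>2 + 2 * s * t * R $ i $ j + t\<^sup>2) / 2)) / 2"
    by (simp only: E_cos)
  also have "\<dots> = exp (- (s\<^sup>2 + t\<^sup>2) / 2) * sinh (s * t * R $ i $ j)"
  proof -
    define A where "A = - (s\<^sup>2 + t\<^sup>2) / 2"
    define b where "b = s * t * R $ i $ j"
    have 1: "- (s\<^sup>2 + 2 * s * (- t) * R $ i $ j + (- t)\<^sup>2) / 2 = A + b"
      by (simp add: A_def b_def field_simps)
    have 2: "- (s\<^sup>2 + 2 * s * t * R $ i $ j + t\<^sup>2) / 2 = A + (- b)"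
      by (simp add: A_def b_def field_simps)
    have "(exp (A + b) - exp (A + (- b))) / 2 = exp A * sinh b"
      by (simp only: exp_add sinh_def) (simp add: field_simps)
    thus ?thesis by (simp only: 1 2 A_def b_def)
  qed
  finally show ?thesis .
qed

lemma distr_vi: "distr M borel (\<lambda>\<omega>. v \<omega> $ i) = std_normal_distribution"
proof -
  interpret prob_space M by (rule M)
  show ?thesis
  proof (rule Levy_uniqueness)
    show "real_distribution (distr M borel (\<lambda>\<omega>. v \<omega> $ i))" by simp
    show "real_distribution std_normal_distribution" by (rule real_dist_normal_dist)
    show "char (distr M borel (\<lambda>\<omega>. v \<omega> $ i)) = char std_normal_distribution"
    proof
      fix t
      have "char (distr M borel (\<lambda>\<omega>. v \<omega> $ i)) t = (CLINT \<omega>|M. iexp (t * v \<omega> $ i))"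
        unfolding char_def by (subst integral_distr) auto
      also have "\<dots> = (CLINT \<omega>|M. iexp (t * v \<omega> $ i + 0 * v \<omega> $ i))" by simp
      also have "\<dots> = complex_of_real (exp (- (t\<^sup>2) / 2))"
        by (subst char2) simp
      finally show "char (distr M borel (\<lambda>\<omega>. v \<omega> $ i)) t = char std_normal_distribution t"
        by (simp add: char_std_normal_distribution)
    qed
  qed
qed

lemma integrable_vi: "integrable M (\<lambda>\<omega>. v \<omega> $ i)"
proof -
  have "integrable (distr M borel (\<lambda>\<omega>. v \<omega> $ i)) (\<lambda>x. x)"
    using integrable_std_normal_distribution_moment[of 1] by (simp add: distr_vi)
  thus ?thesis by (subst (asm) integrable_distr_eq) auto
qed

lemma E_Phi_pow: "(LINT \<omega>|M. Phi (v \<omega> $ i) ^ k) = 1 / real (Suc k)"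
proof -
  have [measurable]: "Phi \<in> borel_measurable borel"
    using isCont_Phi by (intro borel_measurable_continuous_onI continuous_at_imp_continuous_on) auto
  have "(LINT \<omega>|M. Phi (v \<omega> $ i) ^ k) = (LINT x|distr M borel (\<lambda>\<omega>. v \<omega> $ i). Phi x ^ k)"
    by (subst integral_distr) auto
  also have "\<dots> = (LINT x|lborel. phi x * Phi x ^ k)"
    by (simp add: distr_vi integral_density)
  also have "\<dots> = 1 / real (Suc k)" by (rule Phi_pow_integral(2))
  finally show ?thesis .
qed

end

(* ---- P7 ---- *)
definition kk :: "real \<Rightarrow> real \<Rightarrow> real \<Rightarrow> real" where
  "kk \<rho> s t = exp (- (s\<^sup>2 + t\<^sup>2)) * sinh (s * t * \<rho>) / (s * t)"

lemma Phi_bounds: "0 \<le> Phi x" "Phi x \<le> 1"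
proof -
  interpret N: real_distribution "density lborel std_normal_density" by (rule real_dist_normal_dist)
  show "0 \<le> Phi x" "Phi x \<le> 1" unfolding Phi_def by (rule N.cdf_nonneg, rule N.cdf_bounded_prob)
qed

lemma Phi_meas[measurable]: "Phi \<in> borel_measurable borel"
  using isCont_Phi by (intro borel_measurable_continuous_onI continuous_at_imp_continuous_on) auto

lemma G_eq: "(LINT s|lborel. gg s x) = 2 * pi * (Phi x - Phi 0)"
  using Phi_fourier[of x] by simp

lemma G_bound: "\<bar>2 * pi * (Phi x - Phi 0)\<bar> \<le> 2 * pi"
proof -
  have "\<bar>Phi x - Phi 0\<bar> \<le> 1" using Phi_bounds[of x] Phi_bounds[of 0] by linarith
  thus ?thesis by (simp add: abs_mult)
qed

context
  fixes M :: "'a measure" and R :: "real^'n^'n" and v :: "'a \<Rightarrow> real^'n"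
  assumes M: "prob_space M" and R: "correlation_matrix R" and G: "centered_gaussian_vector M v R"
begin

lemma vm[measurable]: "(\<lambda>\<omega>. v \<omega> $ i) \<in> borel_measurable M"
  by (rule vi_meas[OF M R G])

lemma E_gg_gg: "(LINT \<omega>|M. gg t (v \<omega> $ j) * gg s (v \<omega> $ i)) = kk (R $ i $ j) s t"
proof -
  have "(LINT \<omega>|M. gg t (v \<omega> $ j) * gg s (v \<omega> $ i))
      = (LINT \<omega>|M. (exp (- t\<^sup>2 / 2) * exp (- s\<^sup>2 / 2) / (t * s)) * (sin (t * v \<omega> $ j) * sin (s * v \<omega> $ i)))"
    by (intro Bochner_Integration.integral_cong refl) (simp add: gg_def field_simps)
  also have "\<dots> = (exp (- t\<^sup>2 / 2) * exp (- s\<^sup>2 / 2) / (t * s)) * (exp (- (t\<^sup>2 + s\<^sup>2) / 2) * sinh (t * s * R $ j $ i))"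
    by (simp only: integral_mult_right_zero E_sinsin[OF M R G])
  also have "\<dots> = kk (R $ i $ j) s t"
  proof -
    have "exp (- t\<^sup>2 / 2) * exp (- s\<^sup>2 / 2) * exp (- (t\<^sup>2 + s\<^sup>2) / 2) = exp (- (s\<^sup>2 + t\<^sup>2))"
      by (simp only: exp_add[symmetric]) (simp add: field_simps)
    moreover have "R $ j $ i = R $ i $ j" by (rule R_sym[OF M R G])
    ultimately show ?thesis unfolding kk_def by (simp add: field_simps)
  qed
  finally show ?thesis .
qed

lemma E_G: "(LINT \<omega>|M. 2 * pi * (Phi (v \<omega> $ i) - Phi 0)) = 0"
proof -
  interpret prob_space M by (rule M)
  have "(LINT \<omega>|M. 2 * pi * (Phi (v \<omega> $ i) - Phi 0)) = (LINT \<omega>|M. (LINT s|lborel. gg s (v \<omega> $ i)) * 1)"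
    by (simp add: G_eq)
  also have "\<dots> = (LINT s|lborel. LINT \<omega>|M. gg s (v \<omega> $ i) * 1)"
    by (rule fubini_gg(2)[OF M vm[of i] integrable_vi[OF M R G, of i], where W="\<lambda>_. 1" and B=1]) auto
  also have "\<dots> = integral\<^sup>L lborel (\<lambda>s::real. 0::real)"
  proof (intro Bochner_Integration.integral_cong refl)
    fix s
    have "(LINT \<omega>|M. gg s (v \<omega> $ i) * 1) = (LINT \<omega>|M. (exp (- s\<^sup>2 / 2) / s) * sin (s * v \<omega> $ i))"
      by (simp add: gg_def)
    also have "\<dots> = 0" by (simp only: integral_mult_right_zero E_sin1[OF M R G])
    finally show "(LINT \<omega>|M. gg s (v \<omega> $ i) * 1) = 0" .
  qed
  finally show ?thesis by simp
qed

lemma E_Phi: "(LINT \<omega>|M. Phi (v \<omega> $ i)) = Phi 0"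
proof -
  interpret prob_space M by (rule M)
  have ip: "integrable M (\<lambda>\<omega>. Phi (v \<omega> $ i))"
    by (intro integrable_const_bound[where B=1]) (auto simp: Phi_bounds)
  have "(LINT \<omega>|M. 2 * pi * (Phi (v \<omega> $ i) - Phi 0)) = 2 * pi * ((LINT \<omega>|M. Phi (v \<omega> $ i)) - Phi 0)"
    using ip by (simp add: prob_space)
  with E_G show ?thesis by simp
qed

lemma E_inner: "(LINT \<omega>|M. gg s (v \<omega> $ i) * (2 * pi * (Phi (v \<omega> $ j) - Phi 0))) = (LINT t|lborel. kk (R $ i $ j) s t)"
  and E_inner_int: "integrable lborel (\<lambda>t. kk (R $ i $ j) s t)"
proof -
  have "(LINT \<omega>|M. gg s (v \<omega> $ i) * (2 * pi * (Phi (v \<omega> $ j) - Phi 0))) = (LINT t|lborel. kk (R $ i $ j) s t)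
        \<and> integrable lborel (\<lambda>t. kk (R $ i $ j) s t)"
  proof (cases "s = 0")
    case True
    thus ?thesis by (simp add: gg_def kk_def)
  next
    case False
    have wb: "\<bar>gg s (v \<omega> $ i)\<bar> \<le> 1 / \<bar>s\<bar>" for \<omega> by (rule gg_bound2)
    note F = fubini_gg[OF M vm[of j] integrable_vi[OF M R G, of j], where W="\<lambda>\<omega>. gg s (v \<omega> $ i)" and B="1 / \<bar>s\<bar>", OF _ wb]
    have "(LINT \<omega>|M. gg s (v \<omega> $ i) * (2 * pi * (Phi (v \<omega> $ j) - Phi 0)))
       = (LINT \<omega>|M. (LINT t|lborel. gg t (v \<omega> $ j)) * gg s (v \<omega> $ i))"
      by (simp add: G_eq mult.commute)
    also have "\<dots> = (LINT t|lborel. LINT \<omega>|M. gg t (v \<omega> $ j) * gg s (v \<omega> $ i))"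
      by (rule F(2)) measurable
    also have "\<dots> = (LINT t|lborel. kk (R $ i $ j) s t)"
      by (simp only: E_gg_gg)
    finally show ?thesis using F(1) by (simp add: E_gg_gg)
  qed
  thus "(LINT \<omega>|M. gg s (v \<omega> $ i) * (2 * pi * (Phi (v \<omega> $ j) - Phi 0))) = (LINT t|lborel. kk (R $ i $ j) s t)"
    and "integrable lborel (\<lambda>t. kk (R $ i $ j) s t)" by auto
qed

lemma cov_formula:
  "cov_matrix M (\<lambda>\<omega>. \<chi> i. Phi (v \<omega> $ i)) $ i $ j = (1 / (4 * pi\<^sup>2)) * (LINT s|lborel. LINT t|lborel. kk (R $ i $ j) s t)"
  and cov_outer_int: "integrable lborel (\<lambda>s. LINT t|lborel. kk (R $ i $ j) s t)"
proof -
  have gb: "\<bar>2 * pi * (Phi (v \<omega> $ j) - Phi 0)\<bar> \<le> 2 * pi" for \<omega> by (rule G_bound)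
  note F = fubini_gg[OF M vm[of i] integrable_vi[OF M R G, of i], where W="\<lambda>\<omega>. 2 * pi * (Phi (v \<omega> $ j) - Phi 0)" and B="2 * pi", OF _ gb]
  have F1: "integrable lborel (\<lambda>s. LINT \<omega>|M. gg s (v \<omega> $ i) * (2 * pi * (Phi (v \<omega> $ j) - Phi 0)))"
    by (rule F(1)) measurable
  then show "integrable lborel (\<lambda>s. LINT t|lborel. kk (R $ i $ j) s t)"
    by (simp only: E_inner)
  have "cov_matrix M (\<lambda>\<omega>. \<chi> i. Phi (v \<omega> $ i)) $ i $ j
      = (LINT \<omega>|M. (Phi (v \<omega> $ i) - Phi 0) * (Phi (v \<omega> $ j) - Phi 0))"
    by (simp add: cov_matrix_def E_Phi)
  also have "\<dots> = (LINT \<omega>|M. (1 / (4 * pi\<^sup>2)) * ((LINT s|lborel. gg s (v \<omega> $ i)) * (2 * pi * (Phi (v \<omega> $ j) - Phi 0))))"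
    by (intro Bochner_Integration.integral_cong refl) (simp add: G_eq power2_eq_square field_simps)
  also have "\<dots> = (1 / (4 * pi\<^sup>2)) * (LINT \<omega>|M. (LINT s|lborel. gg s (v \<omega> $ i)) * (2 * pi * (Phi (v \<omega> $ j) - Phi 0)))"
    by (rule integral_mult_right_zero)
  also have "(LINT \<omega>|M. (LINT s|lborel. gg s (v \<omega> $ i)) * (2 * pi * (Phi (v \<omega> $ j) - Phi 0)))
      = (LINT s|lborel. LINT \<omega>|M. gg s (v \<omega> $ i) * (2 * pi * (Phi (v \<omega> $ j) - Phi 0)))"
    by (rule F(2)) measurable
  also have "\<dots> = (LINT s|lborel. LINT t|lborel. kk (R $ i $ j) s t)"
    by (simp only: E_inner)
  finally show "cov_matrix M (\<lambda>\<omega>. \<chi> i. Phi (v \<omega> $ i)) $ i $ j = (1 / (4 * pi\<^sup>2)) * (LINT s|lborel. LINT t|lborel. kk (R $ i $ j) s t)" .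
qed

lemma cov_diag: "cov_matrix M (\<lambda>\<omega>. \<chi> i. Phi (v \<omega> $ i)) $ i $ i = 1 / 12"
proof -
  interpret prob_space M by (rule M)
  have i1: "integrable M (\<lambda>\<omega>. Phi (v \<omega> $ i) ^ k)" for k
    by (intro integrable_const_bound[where B=1]) (auto simp: Phi_bounds power_le_one abs_le_iff intro: order_trans[OF _ zero_le_power])
  have m: "(LINT \<omega>|M. Phi (v \<omega> $ i)) = 1 / 2"
    using E_Phi_pow[OF M R G, of i 1] by simp
  have "cov_matrix M (\<lambda>\<omega>. \<chi> i. Phi (v \<omega> $ i)) $ i $ i
      = (LINT \<omega>|M. (Phi (v \<omega> $ i) - 1 / 2) * (Phi (v \<omega> $ i) - 1 / 2))"
    by (simp add: cov_matrix_def m)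
  also have "\<dots> = (LINT \<omega>|M. Phi (v \<omega> $ i) ^ 2 - Phi (v \<omega> $ i) + 1 / 4)"
    by (intro Bochner_Integration.integral_cong refl) (simp add: power2_eq_square field_simps)
  also have "\<dots> = (LINT \<omega>|M. Phi (v \<omega> $ i) ^ 2) - (LINT \<omega>|M. Phi (v \<omega> $ i)) + 1 / 4"
    using i1[of 2] i1[of 1] by (simp add: prob_space)
  also have "\<dots> = 1 / 12"
    using E_Phi_pow[OF M R G, of i 2] m by simp
  finally show ?thesis .
qed

end

(* ---- P8 ---- *)
lemma sinh_ge_self: "0 \<le> (x::real) \<Longrightarrow> x \<le> sinh x"
proof -
  assume x: "0 \<le> x"
  have "(\<lambda>y. sinh y - y) 0 \<le> (\<lambda>y. sinh y - y) x"
  proof (rule DERIV_nonneg_imp_nondecreasing[OF x])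
    fix y :: real
    show "\<exists>d. DERIV (\<lambda>y. sinh y - y) y :> d \<and> 0 \<le> d"
      by (rule exI[of _ "cosh y - 1"]) (auto intro!: derivative_eq_intros simp: cosh_real_ge_1)
  qed
  thus ?thesis by simp
qed

lemma sinh_scale_le: "0 \<le> a \<Longrightarrow> a \<le> 1 \<Longrightarrow> 0 \<le> (y::real) \<Longrightarrow> sinh (a * y) \<le> a * sinh y"
proof -
  assume a: "0 \<le> a" "a \<le> 1" and y: "0 \<le> y"
  have "(\<lambda>y. a * sinh y - sinh (a * y)) 0 \<le> (\<lambda>y. a * sinh y - sinh (a * y)) y"
  proof (rule DERIV_nonneg_imp_nondecreasing[OF y])
    fix x :: real assume x: "0 \<le> x"
    have "cosh (a * x) \<le> cosh x"
      using a x by (subst cosh_real_nonneg_le_iff) (auto intro: mult_left_le_one_le)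
    hence "0 \<le> a * cosh x - cosh (a * x) * a" using a by (simp add: mult_left_mono mult.commute)
    thus "\<exists>d. DERIV (\<lambda>y. a * sinh y - sinh (a * y)) x :> d \<and> 0 \<le> d"
      by (intro exI[of _ "a * cosh x - cosh (a * x) * a"] conjI) (auto intro!: derivative_eq_intros)
  qed
  thus ?thesis by simp
qed

lemma cosh_scale_le: "0 \<le> a \<Longrightarrow> a \<le> 1 \<Longrightarrow> 0 \<le> (y::real) \<Longrightarrow> cosh (a * y) - 1 \<le> a\<^sup>2 * (cosh y - 1)"
proof -
  assume a: "0 \<le> a" "a \<le> 1" and y: "0 \<le> y"
  have "(\<lambda>y. a\<^sup>2 * (cosh y - 1) - (cosh (a * y) - 1)) 0 \<le> (\<lambda>y. a\<^sup>2 * (cosh y - 1) - (cosh (a * y) - 1)) y"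
  proof (rule DERIV_nonneg_imp_nondecreasing[OF y])
    fix x :: real assume x: "0 \<le> x"
    have "sinh (a * x) \<le> a * sinh x" by (rule sinh_scale_le[OF a x])
    hence "0 \<le> a * (a * sinh x - sinh (a * x))" using a by simp
    hence "0 \<le> a\<^sup>2 * sinh x - sinh (a * x) * a" by (simp add: power2_eq_square algebra_simps)
    thus "\<exists>d. DERIV (\<lambda>y. a\<^sup>2 * (cosh y - 1) - (cosh (a * y) - 1)) x :> d \<and> 0 \<le> d"
      by (intro exI[of _ "a\<^sup>2 * sinh x - sinh (a * x) * a"] conjI) (auto intro!: derivative_eq_intros)
  qed
  thus ?thesis by simp
qed

lemma sinh_cube_le: "0 \<le> a \<Longrightarrow> a \<le> 1 \<Longrightarrow> 0 \<le> (y::real) \<Longrightarrow> sinh (a * y) - a * y \<le> a ^ 3 * (sinh y - y)"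
proof -
  assume a: "0 \<le> a" "a \<le> 1" and y: "0 \<le> y"
  have "(\<lambda>y. a ^ 3 * (sinh y - y) - (sinh (a * y) - a * y)) 0 \<le> (\<lambda>y. a ^ 3 * (sinh y - y) - (sinh (a * y) - a * y)) y"
  proof (rule DERIV_nonneg_imp_nondecreasing[OF y])
    fix x :: real assume x: "0 \<le> x"
    have "cosh (a * x) - 1 \<le> a\<^sup>2 * (cosh x - 1)" by (rule cosh_scale_le[OF a x])
    hence "0 \<le> a * (a\<^sup>2 * (cosh x - 1) - (cosh (a * x) - 1))" using a by simp
    hence "0 \<le> a ^ 3 * (cosh x - 1) - (cosh (a * x) * a - a)" by (simp add: power2_eq_square power3_eq_cube algebra_simps)
    thus "\<exists>d. DERIV (\<lambda>y. a ^ 3 * (sinh y - y) - (sinh (a * y) - a * y)) x :> d \<and> 0 \<le> d"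
      by (intro exI[of _ "a ^ 3 * (cosh x - 1) - (cosh (a * x) * a - a)"] conjI) (auto intro!: derivative_eq_intros)
  qed
  thus ?thesis by simp
qed

lemma shc_est:
  fixes \<rho> u :: real
  assumes "\<bar>\<rho>\<bar> \<le> 1" "u \<noteq> 0"
  shows "\<bar>sinh (u * \<rho>) / u - \<rho>\<bar> \<le> \<bar>\<rho>\<bar> ^ 3 * (sinh u / u - 1)"
proof -
  define a where "a = \<bar>\<rho>\<bar>"
  define w where "w = \<bar>u\<bar>"
  have a: "0 \<le> a" "a \<le> 1" using assms by (auto simp: a_def)
  have w: "0 < w" using assms by (auto simp: w_def)
  have ss: "sinh (sgn c * x) = sgn c * sinh x" for c x :: real
    by (cases "c > 0"; cases "c < 0") (auto simp: sgn_if)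
  have su: "sgn u \<noteq> 0" using assms(2) by (simp add: sgn_eq_0_iff)
  have "u * \<rho> = sgn (u * \<rho>) * (w * a)" using sgn_mult_abs[of "u * \<rho>"] by (simp add: w_def a_def abs_mult)
  hence h1: "sinh (u * \<rho>) = sgn u * (sgn \<rho> * sinh (w * a))" by (simp only: ss sgn_mult mult.assoc)
  have h2: "u = sgn u * w" by (simp add: w_def sgn_mult_abs)
  have "sinh (u * \<rho>) / u = (sgn u * (sgn \<rho> * sinh (w * a))) / (sgn u * w)"
    using h1 h2 by (rule arg_cong2[where f="(/)"])
  also have "\<dots> = (sgn \<rho> * sinh (w * a)) / w"
    using su by (rule nonzero_mult_divide_mult_cancel_left)
  finally have e1: "sinh (u * \<rho>) / u = sgn \<rho> * (sinh (w * a) / w)" by simp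
  have h3: "sinh u = sgn u * sinh w" using ss[of u w] by (simp add: w_def sgn_mult_abs)
  have "sinh u / u = (sgn u * sinh w) / (sgn u * w)"
    using h3 h2 by (rule arg_cong2[where f="(/)"])
  also have "\<dots> = sinh w / w"
    using su by (rule nonzero_mult_divide_mult_cancel_left)
  finally have e2: "sinh u / u = sinh w / w" .
  have e3: "\<rho> = sgn \<rho> * a" using sgn_mult_abs[of \<rho>] by (simp add: a_def)
  have "sinh (u * \<rho>) / u - \<rho> = sgn \<rho> * (sinh (w * a) / w - a)"
    by (subst e1, subst (2) e3) (simp only: right_diff_distrib)
  hence "\<bar>sinh (u * \<rho>) / u - \<rho>\<bar> = \<bar>sgn \<rho>\<bar> * \<bar>sinh (w * a) / w - a\<bar>"
    by (simp only: abs_mult)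
  also have "\<dots> \<le> \<bar>sinh (w * a) / w - a\<bar>"
    by (intro mult_left_le_one_le) (auto simp: sgn_if)
  also have "\<bar>sinh (w * a) / w - a\<bar> = (sinh (a * w) - a * w) / w"
  proof -
    have "a * w \<le> sinh (a * w)" using a w by (intro sinh_ge_self) simp
    thus ?thesis using w by (simp add: field_simps mult.commute)
  qed
  also have "\<dots> \<le> a ^ 3 * (sinh w - w) / w"
    using sinh_cube_le[OF a, of w] w by (intro divide_right_mono) auto
  also have "\<dots> = \<bar>\<rho>\<bar> ^ 3 * (sinh u / u - 1)"
    using w by (simp add: e2 a_def field_simps)
  finally show ?thesis .
qed

(* ---- P9 ---- *)
lemma gauss1:
  shows "integrable lborel (\<lambda>t::real. exp (- t\<^sup>2))"
    and "(LINT t|lborel. exp (- t\<^sup>2)) = sqrt pi"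
proof -
  have eq: "normal_density 0 (sqrt (1/2)) t = exp (- t\<^sup>2) / sqrt pi" for t
    using real_sqrt_gt_zero[of "1/2"] by (simp add: normal_density_def)
  have "integrable lborel (\<lambda>t. sqrt pi * normal_density 0 (sqrt (1/2)) t)"
    by (intro integrable_mult_right) (rule integrable_normal_density, simp)
  thus "integrable lborel (\<lambda>t::real. exp (- t\<^sup>2))" by (simp add: eq)
  have "(LINT t|lborel. sqrt pi * normal_density 0 (sqrt (1/2)) t) = sqrt pi"
    by simp
  thus "(LINT t|lborel. exp (- t\<^sup>2)) = sqrt pi" by (simp add: eq)
qed

lemma kk_split: "s * t \<noteq> 0 \<Longrightarrow> kk \<rho> s t = exp (- s\<^sup>2) * exp (- t\<^sup>2) * (sinh ((s * t) * \<rho>) / (s * t))"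
  by (simp add: kk_def exp_add[symmetric])

lemma kk_pt:
  assumes "\<bar>\<rho>\<bar> \<le> 1" "s \<noteq> 0" "t \<noteq> 0"
  shows "\<bar>kk \<rho> s t - \<rho> * (exp (- s\<^sup>2) * exp (- t\<^sup>2))\<bar> \<le> \<bar>\<rho>\<bar> ^ 3 * (kk 1 s t - exp (- s\<^sup>2) * exp (- t\<^sup>2))"
proof -
  define E where "E = exp (- s\<^sup>2) * exp (- t\<^sup>2)"
  have E: "0 < E" by (simp add: E_def)
  have st: "s * t \<noteq> 0" using assms by simp
  have "kk \<rho> s t - \<rho> * E = E * (sinh ((s * t) * \<rho>) / (s * t) - \<rho>)"
    by (simp only: kk_split[OF st] E_def[symmetric] right_diff_distrib mult.commute)
  hence "\<bar>kk \<rho> s t - \<rho> * E\<bar> = E * \<bar>sinh ((s * t) * \<rho>) / (s * t) - \<rho>\<bar>"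
    using E by (simp add: abs_mult)
  also have "\<dots> \<le> E * (\<bar>\<rho>\<bar> ^ 3 * (sinh (s * t) / (s * t) - 1))"
    using shc_est[OF assms(1) st] E by (intro mult_left_mono) auto
  also have "\<dots> = \<bar>\<rho>\<bar> ^ 3 * (kk 1 s t - E)"
    by (simp add: kk_split[OF st] E_def[symmetric] algebra_simps)
  finally show ?thesis by (simp add: E_def)
qed

lemma kint_est:
  fixes \<rho> :: real
  assumes r: "\<bar>\<rho>\<bar> \<le> 1"
    and I: "\<And>s. integrable lborel (\<lambda>t. kk \<rho> s t)" and O: "integrable lborel (\<lambda>s. LINT t|lborel. kk \<rho> s t)"
    and I1: "\<And>s. integrable lborel (\<lambda>t. kk 1 s t)" and O1: "integrable lborel (\<lambda>s. LINT t|lborel. kk 1 s t)"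
  shows "\<bar>(LINT s|lborel. LINT t|lborel. kk \<rho> s t) - \<rho> * pi\<bar>
     \<le> \<bar>\<rho>\<bar> ^ 3 * ((LINT s|lborel. LINT t|lborel. kk 1 s t) - pi)"
proof -
  note g = gauss1
  have pi: "sqrt pi * sqrt pi = pi" by simp
  define A where "A r s = (LINT t|lborel. kk r s t) - r * sqrt pi * exp (- s\<^sup>2)" for r s
  have intA: "integrable lborel (A r)"
    if "integrable lborel (\<lambda>s. LINT t|lborel. kk r s t)" for r
    unfolding A_def by (intro Bochner_Integration.integrable_diff that integrable_mult_right g(1))
  have intA': "integrable lborel (\<lambda>s. LINT t|lborel. kk r s t - r * (exp (- s\<^sup>2) * exp (- t\<^sup>2)))"
    if "integrable lborel (\<lambda>s. LINT t|lborel. kk r s t)" "\<And>s. integrable lborel (\<lambda>t. kk r s t)" for r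
  proof -
    have "(\<lambda>s. LINT t|lborel. kk r s t - r * (exp (- s\<^sup>2) * exp (- t\<^sup>2))) = A r"
    proof
      fix s
      show "(LINT t|lborel. kk r s t - r * (exp (- s\<^sup>2) * exp (- t\<^sup>2))) = A r s"
        using that(2)[of s] g by (simp add: A_def Bochner_Integration.integral_diff[OF that(2) integrable_mult_right[OF integrable_mult_right[OF g(1)]]] mult.assoc)
    qed
    thus ?thesis using intA[OF that(1)] by simp
  qed
  have totA: "(LINT s|lborel. LINT t|lborel. kk r s t) = (LINT s|lborel. A r s) + r * pi"
    if "integrable lborel (\<lambda>s. LINT t|lborel. kk r s t)" for r
  proof -
    have "(LINT s|lborel. A r s) = (LINT s|lborel. LINT t|lborel. kk r s t) - r * sqrt pi * sqrt pi"
      unfolding A_def by (subst Bochner_Integration.integral_diff[OF that integrable_mult_right[OF g(1)]]) (simp add: g(2))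
    thus ?thesis by (simp add: pi mult.assoc)
  qed
  have Aeq: "A r s = (LINT t|lborel. kk r s t - r * (exp (- s\<^sup>2) * exp (- t\<^sup>2)))"
    if "\<And>s. integrable lborel (\<lambda>t. kk r s t)" for r s
    using g by (simp add: A_def Bochner_Integration.integral_diff[OF that integrable_mult_right[OF integrable_mult_right[OF g(1)]]] mult.assoc)
  have ptA: "\<bar>A \<rho> s\<bar> \<le> \<bar>\<rho>\<bar> ^ 3 * A 1 s" if s: "s \<noteq> 0" for s
  proof -
    have "\<bar>A \<rho> s\<bar> \<le> (LINT t|lborel. \<bar>kk \<rho> s t - \<rho> * (exp (- s\<^sup>2) * exp (- t\<^sup>2))\<bar>)"
      by (simp only: Aeq[OF I] integral_abs_bound)
    also have "\<dots> \<le> (LINT t|lborel. \<bar>\<rho>\<bar> ^ 3 * (kk 1 s t - exp (- s\<^sup>2) * exp (- t\<^sup>2)))"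
    proof (rule integral_mono_AE')
      show "integrable lborel (\<lambda>t. \<bar>\<rho>\<bar> ^ 3 * (kk 1 s t - exp (- s\<^sup>2) * exp (- t\<^sup>2)))"
        by (intro integrable_mult_right Bochner_Integration.integrable_diff I1 g(1))
      show "AE t in lborel. \<bar>kk \<rho> s t - \<rho> * (exp (- s\<^sup>2) * exp (- t\<^sup>2))\<bar> \<le> \<bar>\<rho>\<bar> ^ 3 * (kk 1 s t - exp (- s\<^sup>2) * exp (- t\<^sup>2))"
        using AE_lborel_singleton[of 0] by eventually_elim (rule kk_pt[OF r s])
      show "AE t in lborel. 0 \<le> \<bar>\<rho>\<bar> ^ 3 * (kk 1 s t - exp (- s\<^sup>2) * exp (- t\<^sup>2))"
        using AE_lborel_singleton[of 0] by eventually_elim (rule order_trans[OF abs_ge_zero kk_pt[OF r s]])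
    qed
    also have "\<dots> = \<bar>\<rho>\<bar> ^ 3 * A 1 s"
      by (simp add: Aeq[OF I1])
    finally show ?thesis .
  qed
  have "\<bar>(LINT s|lborel. LINT t|lborel. kk \<rho> s t) - \<rho> * pi\<bar> = \<bar>LINT s|lborel. A \<rho> s\<bar>"
    by (simp add: totA[OF O])
  also have "\<dots> \<le> (LINT s|lborel. \<bar>A \<rho> s\<bar>)" by (rule integral_abs_bound)
  also have "\<dots> \<le> (LINT s|lborel. \<bar>\<rho>\<bar> ^ 3 * A 1 s)"
  proof (rule integral_mono_AE')
    show "integrable lborel (\<lambda>s. \<bar>\<rho>\<bar> ^ 3 * A 1 s)"
      by (intro integrable_mult_right intA O1)
    show "AE s in lborel. \<bar>A \<rho> s\<bar> \<le> \<bar>\<rho>\<bar> ^ 3 * A 1 s"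
      using AE_lborel_singleton[of 0] by eventually_elim (rule ptA)
    show "AE s in lborel. 0 \<le> \<bar>\<rho>\<bar> ^ 3 * A 1 s"
      using AE_lborel_singleton[of 0] by eventually_elim (rule order_trans[OF abs_ge_zero ptA])
  qed
  also have "\<dots> = \<bar>\<rho>\<bar> ^ 3 * ((LINT s|lborel. LINT t|lborel. kk 1 s t) - pi)"
    by (simp add: totA[OF O1])
  finally show ?thesis .
qed

(* ---- P10 ---- *)
lemma norm2_vec: "norm (x :: real^'n) ^ 2 = (\<Sum>i\<in>UNIV. (x $ i)\<^sup>2)"
  unfolding power2_norm_eq_inner inner_vec_def by (simp add: power2_eq_square)

lemma col_sq: "(\<Sum>k\<in>UNIV. (R $ k $ i)\<^sup>2) \<le> (onorm ((*v) (R :: real^'n^'n)))\<^sup>2"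
proof -
  have "(\<Sum>k\<in>UNIV. (R $ k $ i)\<^sup>2) = norm (column i R) ^ 2"
    by (simp add: norm2_vec column_def)
  also have "\<dots> \<le> (onorm ((*v) R))\<^sup>2"
    by (intro power_mono norm_column_le_onorm) simp
  finally show ?thesis .
qed

lemma double_sum_bound:
  fixes R :: "real^'n^'n" and x y :: "real^'n"
  assumes sym: "\<And>i j. R $ j $ i = R $ i $ j"
  shows "(\<Sum>i\<in>UNIV. \<Sum>j\<in>UNIV. \<bar>y $ i\<bar> * \<bar>x $ j\<bar> * (R $ i $ j)\<^sup>2) \<le> (onorm ((*v) R))\<^sup>2 * norm x * norm y"
proof -
  define N where "N = onorm ((*v) R)"
  have N: "0 \<le> N" unfolding N_def by (rule onorm_pos_le) simp
  define S where "S = (\<Sum>i\<in>UNIV. \<Sum>j\<in>UNIV. \<bar>y $ i\<bar> * \<bar>x $ j\<bar> * (R $ i $ j)\<^sup>2)"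
  have S0: "0 \<le> S" unfolding S_def by (intro sum_nonneg) auto
  have "S = (\<Sum>p\<in>UNIV \<times> UNIV. (\<bar>y $ fst p\<bar> * \<bar>R $ fst p $ snd p\<bar>) * (\<bar>x $ snd p\<bar> * \<bar>R $ fst p $ snd p\<bar>))"
    unfolding S_def sum.cartesian_product
    by (intro sum.cong refl) (auto simp: power2_eq_square abs_mult_self_eq mult_ac split: prod.splits)
  hence CS: "S\<^sup>2 \<le> (\<Sum>p\<in>UNIV \<times> UNIV. (\<bar>y $ fst p\<bar> * \<bar>R $ fst p $ snd p\<bar>)\<^sup>2) * (\<Sum>p\<in>UNIV \<times> UNIV. (\<bar>x $ snd p\<bar> * \<bar>R $ fst p $ snd p\<bar>)\<^sup>2)"
    by (simp only: Cauchy_Schwarz_ineq_sum)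
  have A: "(\<Sum>p\<in>UNIV \<times> UNIV. (\<bar>y $ fst p\<bar> * \<bar>R $ fst p $ snd p\<bar>)\<^sup>2) \<le> N\<^sup>2 * (norm y)\<^sup>2"
  proof -
    have "(\<Sum>p\<in>UNIV \<times> UNIV. (\<bar>y $ fst p\<bar> * \<bar>R $ fst p $ snd p\<bar>)\<^sup>2) = (\<Sum>i\<in>UNIV. (y $ i)\<^sup>2 * (\<Sum>j\<in>UNIV. (R $ j $ i)\<^sup>2))"
      by (simp add: power_mult_distrib sum_distrib_left sym sum.cartesian_product split_beta')
    also have "\<dots> \<le> (\<Sum>i\<in>UNIV. (y $ i)\<^sup>2 * N\<^sup>2)"
      by (intro sum_mono mult_left_mono) (auto simp: N_def col_sq)
    also have "\<dots> = N\<^sup>2 * (norm y)\<^sup>2" by (simp add: norm2_vec sum_distrib_left mult.commute)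
    finally show ?thesis .
  qed
  have B: "(\<Sum>p\<in>UNIV \<times> UNIV. (\<bar>x $ snd p\<bar> * \<bar>R $ fst p $ snd p\<bar>)\<^sup>2) \<le> N\<^sup>2 * (norm x)\<^sup>2"
  proof -
    have "(\<Sum>j\<in>UNIV. (x $ j)\<^sup>2 * (\<Sum>i\<in>UNIV. (R $ i $ j)\<^sup>2)) = (\<Sum>j\<in>UNIV. \<Sum>i\<in>UNIV. (x $ j)\<^sup>2 * (R $ i $ j)\<^sup>2)"
      by (simp add: sum_distrib_left)
    also have "\<dots> = (\<Sum>i\<in>UNIV. \<Sum>j\<in>UNIV. (x $ j)\<^sup>2 * (R $ i $ j)\<^sup>2)"
      by (rule sum.swap)
    finally have "(\<Sum>p\<in>UNIV \<times> UNIV. (\<bar>x $ snd p\<bar> * \<bar>R $ fst p $ snd p\<bar>)\<^sup>2) = (\<Sum>j\<in>UNIV. (x $ j)\<^sup>2 * (\<Sum>i\<in>UNIV. (R $ i $ j)\<^sup>2))"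
      by (simp add: power_mult_distrib sum.cartesian_product split_beta')
    also have "\<dots> \<le> (\<Sum>j\<in>UNIV. (x $ j)\<^sup>2 * N\<^sup>2)"
      by (intro sum_mono mult_left_mono) (auto simp: N_def col_sq)
    also have "\<dots> = N\<^sup>2 * (norm x)\<^sup>2" by (simp add: norm2_vec sum_distrib_left mult.commute)
    finally show ?thesis .
  qed
  have "S\<^sup>2 \<le> (N\<^sup>2 * (norm y)\<^sup>2) * (N\<^sup>2 * (norm x)\<^sup>2)"
    using CS mult_mono[OF A B] by (simp add: sum_nonneg)
  hence "S\<^sup>2 \<le> (N\<^sup>2 * norm x * norm y)\<^sup>2"
    by (simp add: power_mult_distrib mult_ac)
  hence "S \<le> N\<^sup>2 * norm x * norm y"
    by (rule power2_le_imp_le) (simp add: N)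
  thus ?thesis by (simp add: S_def N_def)
qed

lemma onorm_pert:
  fixes S R :: "real^'n^'n"
  assumes c: "0 \<le> c" and c0: "0 \<le> c0"
    and sym: "\<And>i j. R $ j $ i = R $ i $ j"
    and b: "\<And>i j. \<bar>S $ i $ j - c0 * R $ i $ j\<bar> \<le> c * (R $ i $ j)\<^sup>2"
  shows "onorm ((*v) S) \<le> c0 * onorm ((*v) R) + c * (onorm ((*v) R))\<^sup>2"
proof (rule onorm_le)
  fix x :: "real^'n"
  define N where "N = onorm ((*v) R)"
  define C where "C = c0 * N + c * N\<^sup>2"
  have N: "0 \<le> N" unfolding N_def by (rule onorm_pos_le) simp
  define y where "y = S *v x"
  have "(norm y)\<^sup>2 = y \<bullet> (S *v x)" by (simp add: y_def power2_norm_eq_inner)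
  also have "\<dots> = (\<Sum>i\<in>UNIV. \<Sum>j\<in>UNIV. y $ i * S $ i $ j * x $ j)"
    by (simp add: inner_vec_def matrix_vector_mult_def sum_distrib_left mult_ac)
  also have "\<dots> = c0 * (\<Sum>i\<in>UNIV. \<Sum>j\<in>UNIV. y $ i * R $ i $ j * x $ j)
       + (\<Sum>i\<in>UNIV. \<Sum>j\<in>UNIV. y $ i * x $ j * (S $ i $ j - c0 * R $ i $ j))"
    by (simp add: sum_distrib_left sum.distrib[symmetric] algebra_simps)
  also have "(\<Sum>i\<in>UNIV. \<Sum>j\<in>UNIV. y $ i * R $ i $ j * x $ j) = y \<bullet> (R *v x)"
    by (simp add: inner_vec_def matrix_vector_mult_def sum_distrib_left mult_ac)
  also have "c0 * (y \<bullet> (R *v x)) \<le> c0 * (N * norm x * norm y)"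
  proof (intro mult_left_mono c0)
    have "y \<bullet> (R *v x) \<le> norm y * norm (R *v x)" by (rule norm_cauchy_schwarz)
    also have "\<dots> \<le> norm y * (N * norm x)"
      unfolding N_def by (intro mult_left_mono onorm[OF matrix_vector_mul_bounded_linear]) simp
    finally show "y \<bullet> (R *v x) \<le> N * norm x * norm y" by (simp add: mult_ac)
  qed
  also have "(\<Sum>i\<in>UNIV. \<Sum>j\<in>UNIV. y $ i * x $ j * (S $ i $ j - c0 * R $ i $ j))
      \<le> (\<Sum>i\<in>UNIV. \<Sum>j\<in>UNIV. c * (\<bar>y $ i\<bar> * \<bar>x $ j\<bar> * (R $ i $ j)\<^sup>2))"
  proof (intro sum_mono)
    fix i j
    have "y $ i * x $ j * (S $ i $ j - c0 * R $ i $ j) \<le> \<bar>y $ i * x $ j\<bar> * \<bar>S $ i $ j - c0 * R $ i $ j\<bar>"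
      by (simp only: abs_mult[symmetric] abs_ge_self)
    also have "\<dots> \<le> \<bar>y $ i * x $ j\<bar> * (c * (R $ i $ j)\<^sup>2)"
      by (intro mult_left_mono b) simp
    finally show "y $ i * x $ j * (S $ i $ j - c0 * R $ i $ j) \<le> c * (\<bar>y $ i\<bar> * \<bar>x $ j\<bar> * (R $ i $ j)\<^sup>2)"
      by (simp add: abs_mult mult_ac)
  qed
  also have "\<dots> = c * (\<Sum>i\<in>UNIV. \<Sum>j\<in>UNIV. \<bar>y $ i\<bar> * \<bar>x $ j\<bar> * (R $ i $ j)\<^sup>2)"
    by (simp add: sum_distrib_left)
  also have "\<dots> \<le> c * (N\<^sup>2 * norm x * norm y)"
    unfolding N_def by (intro mult_left_mono double_sum_bound sym c)
  finally have "(norm y)\<^sup>2 \<le> C * norm x * norm y"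
    by (simp add: C_def algebra_simps)
  hence yy: "norm y * norm y \<le> (C * norm x) * norm y"
    by (simp add: power2_eq_square mult_ac)
  have C0: "0 \<le> C" unfolding C_def using c c0 N by simp
  have "norm y \<le> C * norm x"
  proof (cases "norm y = 0")
    case True thus ?thesis using C0 by simp
  next
    case False
    hence "0 < norm y" by simp
    with yy show ?thesis by (rule mult_right_le_imp_le)
  qed
  thus "norm (S *v x) \<le> (c0 * onorm ((*v) R) + c * (onorm ((*v) R))\<^sup>2) * norm x"
    by (simp add: y_def C_def N_def)
qed

(* ---- P11 ---- *)
lemma quadR:
  fixes R :: "real^'n^'n" and i j :: 'n and s t :: real
  assumes sym: "\<And>i j. R $ j $ i = R $ i $ j" and diag: "\<And>i. R $ i $ i = 1"
  defines "a \<equiv> (\<chi> k. (if k = i then s else 0) + (if k = j then t else 0)) :: real^'n"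
  shows "a \<bullet> (R *v a) = s\<^sup>2 + 2 * s * t * R $ i $ j + t\<^sup>2"
proof -
  have m1: "(if P then x else 0) * y = (if P then x * y else (0::real))" for P x y by simp
  have m2: "y * (if P then x else 0) = (if P then y * x else (0::real))" for P x y by simp
  have av: "a \<bullet> w = s * w $ i + t * w $ j" for w :: "real^'n"
    by (simp add: a_def inner_vec_def sum.distrib distrib_right m1)
  have Ra: "(R *v a) $ k = s * R $ k $ i + t * R $ k $ j" for k
    by (simp add: a_def matrix_vector_mult_def sum.distrib distrib_left m2 mult.commute)
  have "a \<bullet> (R *v a) = s * (s * R $ i $ i + t * R $ i $ j) + t * (s * R $ j $ i + t * R $ j $ j)"
    by (simp add: av Ra)
  also have "\<dots> = s\<^sup>2 + 2 * s * t * R $ i $ j + t\<^sup>2"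
    by (simp add: diag sym power2_eq_square algebra_simps)
  finally show ?thesis .
qed

lemma corr_bound:
  fixes R :: "real^'n^'n"
  assumes "correlation_matrix R"
  shows "\<bar>R $ i $ j\<bar> \<le> 1"
proof -
  have sym: "R $ j $ i = R $ i $ j" for i j
  proof -
    have "transpose R = R" using assms by (simp add: correlation_matrix_def)
    hence "transpose R $ i $ j = R $ i $ j" by simp
    thus ?thesis by (simp add: transpose_def)
  qed
  have diag: "R $ i $ i = 1" for i using assms by (simp add: correlation_matrix_def)
  have psd: "0 \<le> x \<bullet> (R *v x)" for x using assms by (simp add: correlation_matrix_def)
  have "0 \<le> 1\<^sup>2 + 2 * 1 * 1 * R $ i $ j + 1\<^sup>2"
    by (subst quadR[OF sym diag, of i 1 j 1, symmetric]) (rule psd)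
  moreover have "0 \<le> 1\<^sup>2 + 2 * 1 * (-1) * R $ i $ j + (-1)\<^sup>2"
    by (subst quadR[OF sym diag, of i 1 j "-1", symmetric]) (rule psd)
  ultimately show ?thesis by simp
qed

theorem fact2:
  fixes M :: "'a measure" and R :: "real^'n^'n" and v :: "'a \<Rightarrow> real^'n"
  assumes "prob_space M"
    and "correlation_matrix R"
    and "centered_gaussian_vector M v R"
  shows "op_norm2 (cov_matrix M (\<lambda>\<omega>. \<chi> i. Phi (v \<omega> $ i)))
           \<le> 1 / (2 * pi) * (op_norm2 R / 2 + 4 * (op_norm2 R)\<^sup>2 * (pi / 6 - 1 / 2))"
proof -
  note M = assms(1) and Rc = assms(2) and G = assms(3)
  define S where "S = cov_matrix M (\<lambda>\<omega>. \<chi> i. Phi (v \<omega> $ i))"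
  define K where "K \<rho> = (LINT s|lborel. LINT t|lborel. kk \<rho> s t)" for \<rho>
  define c0 where "c0 = 1 / (4 * pi)"
  define c where "c = 1 / 12 - 1 / (4 * pi)"
  have pi3: "3 < pi" by (rule pi_gt3)
  have c0: "0 \<le> c0" by (simp add: c0_def)
  have c: "0 \<le> c" using pi3 by (simp add: c_def field_simps)
  have sym: "R $ j $ i = R $ i $ j" for i j by (rule R_sym[OF M Rc G])
  have diag: "R $ i $ i = 1" for i by (rule R_diag[OF M Rc G])
  have Sij: "S $ i $ j = (1 / (4 * pi\<^sup>2)) * K (R $ i $ j)" for i j
    unfolding S_def K_def by (rule cov_formula[OF M Rc G])
  have K1: "K 1 = pi\<^sup>2 / 3"
  proof -
    have a: "S $ undefined $ undefined = 1 / 12"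
      unfolding S_def by (rule cov_diag[OF M Rc G])
    have b: "S $ undefined $ undefined = (1 / (4 * pi\<^sup>2)) * K 1"
      using Sij[of undefined undefined] by (simp only: diag)
    have h: "(1 / (4 * pi\<^sup>2)) * K 1 = 1 / 12"
      by (rule trans[OF b[symmetric] a])
    have "K 1 = (4 * pi\<^sup>2) * ((1 / (4 * pi\<^sup>2)) * K 1)" by simp
    also have "\<dots> = (4 * pi\<^sup>2) * (1 / 12)" by (simp only: h)
    finally show ?thesis by simp
  qed
  have b: "\<bar>S $ i $ j - c0 * R $ i $ j\<bar> \<le> c * (R $ i $ j)\<^sup>2" for i j
  proof -
    define \<rho> where "\<rho> = R $ i $ j"
    have r: "\<bar>\<rho>\<bar> \<le> 1" unfolding \<rho>_def by (rule corr_bound[OF Rc])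
    have I: "integrable lborel (\<lambda>t. kk \<rho> s t)" for s unfolding \<rho>_def by (rule E_inner_int[OF M Rc G])
    have O: "integrable lborel (\<lambda>s. LINT t|lborel. kk \<rho> s t)" unfolding \<rho>_def by (rule cov_outer_int[OF M Rc G])
    have I1: "integrable lborel (\<lambda>t. kk 1 s t)" for s using E_inner_int[OF M Rc G, of i i s] by (simp add: diag)
    have O1: "integrable lborel (\<lambda>s. LINT t|lborel. kk 1 s t)" using cov_outer_int[OF M Rc G, of i i] by (simp add: diag)
    have est: "\<bar>K \<rho> - \<rho> * pi\<bar> \<le> \<bar>\<rho>\<bar> ^ 3 * (K 1 - pi)"
      unfolding K_def by (rule kint_est[OF r I O I1 O1])
    have pos: "0 < 4 * pi\<^sup>2" by simp
    have "\<bar>S $ i $ j - c0 * \<rho>\<bar> = \<bar>K \<rho> - \<rho> * pi\<bar> / (4 * pi\<^sup>2)"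
    proof -
      have "S $ i $ j - c0 * \<rho> = (K \<rho> - \<rho> * pi) / (4 * pi\<^sup>2)"
        by (simp add: Sij \<rho>_def[symmetric] c0_def power2_eq_square field_simps)
      thus ?thesis by simp
    qed
    also have "\<dots> \<le> \<bar>\<rho>\<bar> ^ 3 * (K 1 - pi) / (4 * pi\<^sup>2)"
      using est pos by (intro divide_right_mono) auto
    also have "\<dots> = \<bar>\<rho>\<bar> ^ 3 * c"
      by (simp add: K1 c_def power2_eq_square field_simps)
    also have "\<dots> \<le> \<rho>\<^sup>2 * c"
    proof (intro mult_right_mono c)
      have "\<bar>\<rho>\<bar> ^ 3 = \<bar>\<rho>\<bar> * \<bar>\<rho>\<bar>\<^sup>2" by (simp add: power3_eq_cube power2_eq_square)
      also have "\<dots> \<le> 1 * \<bar>\<rho>\<bar>\<^sup>2" using r by (intro mult_right_mono) auto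
      finally show "\<bar>\<rho>\<bar> ^ 3 \<le> \<rho>\<^sup>2" by simp
    qed
    finally show ?thesis by (simp add: \<rho>_def mult.commute)
  qed
  have main: "onorm ((*v) S) \<le> c0 * onorm ((*v) R) + c * (onorm ((*v) R))\<^sup>2"
    by (rule onorm_pert[OF c c0 sym b])
  define N where "N = onorm ((*v) R)"
  have "c * N\<^sup>2 \<le> (4 / (2 * pi) * (pi / 6 - 1 / 2)) * N\<^sup>2"
  proof (intro mult_right_mono)
    show "c \<le> 4 / (2 * pi) * (pi / 6 - 1 / 2)"
      using pi3 by (simp add: c_def field_simps)
  qed simp
  moreover have "1 / (2 * pi) * (N / 2 + 4 * N\<^sup>2 * (pi / 6 - 1 / 2)) = c0 * N + (4 / (2 * pi) * (pi / 6 - 1 / 2)) * N\<^sup>2"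
    by (simp add: c0_def field_simps)
  ultimately have "c0 * N + c * N\<^sup>2 \<le> 1 / (2 * pi) * (N / 2 + 4 * N\<^sup>2 * (pi / 6 - 1 / 2))"
    by linarith
  with main show ?thesis
    by (simp add: op_norm2_def S_def N_def)
qed

end
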